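(* Let $n\ge4$, $\mathfrak g=\mathfrak{so}(2n+1,\mathbb C)$, and let $\mathfrak q=\mathfrak l\oplus\mathfrak n$ be the maximal parabolic subalgebra of type $B_n(n-1)$ (determined by $\alpha_{n-1}$). Let $V(\mu+\epsilon_{n\gamma})=\mathfrak l_{n\gamma}\otimes\mathfrak z(\mathfrak n)$. Then the $\mathfrak l$-intertwining operator $\tilde\tau_2|_{V(\mu+\epsilon_{n\gamma})^*}:V(\mu+\epsilon_{n\gamma})^*\to\mathcal P^2(\mathfrak g(1))$ is not identically zero.
   Context: Type $B_n$: $\mathfrak g=\mathfrak{so}(2n+1,\mathbb C)$ with Cartan $\mathfrak h$, roots $\pm\varepsilon_j\pm\varepsilon_k$ ($j<k$) and $\pm\varepsilon_j$, simple roots $\alpha_j=\varepsilon_j-\varepsilon_{j+1}$ ($j<n$), $\alpha_n=\varepsilon_n$, Killing form $\kappa$, root vectors $X_\alpha$. $\mathfrak q=\mathfrak l\oplus\mathfrak n$ is the standard maximal parabolic subalgebra determined by $\alpha_{n-1}$: $\mathfrak l$ is $\mathfrak h$ plus root spaces of roots in the span of $\Pi\setminus\{\alpha_{n-1}\}$. Grading by the $\alpha_{n-1}$-coefficient: $\mathfrak g=\bigoplus_{j=-2}^2\mathfrak g(j)$, $\mathfrak l=\mathfrak g(0)$, $\Delta(\mathfrak g(1))=\{\varepsilon_j\pm\varepsilon_n,\ \varepsilon_j : 1\le j\le n-1\}$, $\mathfrak z(\mathfrak n)=\mathfrak g(2)$ with roots $\varepsilon_j+\varepsilon_k$ ($1\le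 j<k\le n-1$), $\bar{\mathfrak n}=\mathfrak g(-1)\oplus\mathfrak g(-2)$, $\mathfrak z(\bar{\mathfrak n})=\mathfrak g(-2)$. The highest weight of $\mathfrak g(1)$ is $\mu=\varepsilon_1+\varepsilon_n$. $\mathfrak l_{n\gamma}=\mathrm{span}\{X_{\varepsilon_n},[X_{\varepsilon_n},X_{-\varepsilon_n}],X_{-\varepsilon_n}\}\cong\mathfrak{sl}(2,\mathbb C)$ is the simple ideal of $[\mathfrak l,\mathfrak l]$ corresponding to $\alpha_n$; $\mathfrak l_{n\gamma}\otimes\mathfrak z(\mathfrak n)$ is an irreducible $\mathfrak l$-module, denoted $V(\mu+\epsilon_{n\gamma})$, of highest weight $\varepsilon_1+\varepsilon_2+\varepsilon_n$. $\omega=\sum_{\gamma\in\Delta(\mathfrak z(\mathfrak n))}X^*_\gamma\otimes X_\gamma$ where $X^*_\gamma\in\mathfrak g_{-\gamma}$, $\kappa(X^*_\gamma,X_{\gamma'})=\delta_{\gamma\gamma'}$; $\tau_2:\mathfrak g(1)\to\mathfrak l\otimes\mathfrak z(\mathfrak n)$, $\tau_2(X)=\tfrac12(\mathrm{ad}(X)^2\otimes\mathrm{Id})\omega$. For an irreducible constituent $W$ of $\mathfrak l\otimes\mathfrak z(\mathfrak n)$ its dual $W^*$ is realized in $\mathfrak l\otimes\mathfrak z(\bar{\mathfrak n})$ via $(A\otimes B)(C\otimes D)=\kappa(A,C)\kappa(B,D)$, and $\tilde\tau_2|_{W^*}:W^*\to\mathcal P^2(\mathfrak g(1))$ (quadratic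 polynomials on $\mathfrak g(1)$) is $\tilde\tau_2(Y^* )(X)=Y^*(\tau_2(X))$. *)

theory Defs
  imports Complex_Main
begin

text \<open>Matrices are functions nat => nat => complex,
  supported on indices below N = 2n+1.  Index 0 stands for e_0, index i (1 <= i <= n)
  for e_i and index n+i for e_{-i}.  The invariant symmetric form pairs e_i with e_{-i}
  and e_0 with itself.\<close>

type_synonym cmat = "nat \<Rightarrow> nat \<Rightarrow> complex"
type_synonym ctens = "nat \<Rightarrow> nat \<Rightarrow> nat \<Rightarrow> nat \<Rightarrow> complex"

definition dimN :: "nat \<Rightarrow> nat" where
  "dimN n = 2 * n + 1"

definition mmul :: "nat \<Rightarrow> cmat \<Rightarrow> cmat \<Rightarrow> cmat" where
  "mmul n A B = (\<lambda>i j. \<Sum>k<dimN n. A i k * B k j)"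

definition mtrans :: "cmat \<Rightarrow> cmat" where
  "mtrans A = (\<lambda>i j. A j i)"

definition madd :: "cmat \<Rightarrow> cmat \<Rightarrow> cmat" where
  "madd A B = (\<lambda>i j. A i j + B i j)"

definition msmul :: "complex \<Rightarrow> cmat \<Rightarrow> cmat" where
  "msmul c A = (\<lambda>i j. c * A i j)"

definition mzero :: cmat where
  "mzero = (\<lambda>i j. 0)"

definition supp_in :: "nat \<Rightarrow> cmat \<Rightarrow> bool" where
  "supp_in n A \<longleftrightarrow> (\<forall>i j. (dimN n \<le> i \<or> dimN n \<le> j) \<longrightarrow> A i j = 0)"

definition dualidx :: "nat \<Rightarrow> nat \<Rightarrow> nat" where
  "dualidx n i = (if i = 0 then 0 else if i \<le> n then i + n else i - n)"

definition Jform :: "nat \<Rightarrow> cmat" where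
  "Jform n = (\<lambda>i j. if i < dimN n \<and> j < dimN n \<and> j = dualidx n i then 1 else 0)"

definition soalg :: "nat \<Rightarrow> cmat set" where
  "soalg n = {A. supp_in n A \<and>
      (\<forall>i j. madd (mmul n (mtrans A) (Jform n)) (mmul n (Jform n) A) i j = 0)}"

definition bracket :: "nat \<Rightarrow> cmat \<Rightarrow> cmat \<Rightarrow> cmat" where
  "bracket n A B = (\<lambda>i j. mmul n A B i j - mmul n B A i j)"

definition mtrace :: "nat \<Rightarrow> cmat \<Rightarrow> complex" where
  "mtrace n A = (\<Sum>i<dimN n. A i i)"

definition kill :: "nat \<Rightarrow> cmat \<Rightarrow> cmat \<Rightarrow> complex" where
  "kill n A B = (2 * of_nat n - 1) * mtrace n (mmul n A B)"

definition cartan :: "nat \<Rightarrow> cmat set" where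
  "cartan n = {H \<in> soalg n. \<forall>i j. i \<noteq> j \<longrightarrow> H i j = 0}"

text \<open>Root (weight) space of a functional alpha on the Cartan subalgebra.
  The weight eps_j is H |-> H j j (1 <= j <= n).\<close>
definition rootspace :: "nat \<Rightarrow> (cmat \<Rightarrow> complex) \<Rightarrow> cmat set" where
  "rootspace n \<alpha> = {X \<in> soalg n. \<forall>H \<in> cartan n. bracket n H X = msmul (\<alpha> H) X}"

text \<open>Grading element: the fundamental coweight of alpha_{n-1}, i.e. H0 with
  eps_j(H0) = 1 for j <= n-1 and eps_n(H0) = 0; alpha(H0) is the alpha_{n-1}-coefficient
  of a root alpha.\<close>
definition H0 :: "nat \<Rightarrow> cmat" where
  "H0 n = (\<lambda>i j. if i = j \<and> 1 \<le> i \<and> i \<le> n - 1 then 1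
                 else if i = j \<and> n + 1 \<le> i \<and> i \<le> 2 * n - 1 then -1 else 0)"

text \<open>g(k): the sum of root spaces whose alpha_{n-1}-coefficient is k (plus h for k = 0).\<close>
definition grade :: "nat \<Rightarrow> int \<Rightarrow> cmat set" where
  "grade n k = {X \<in> soalg n. bracket n (H0 n) X = msmul (of_int k) X}"

definition lngamma :: "nat \<Rightarrow> cmat set" where
  "lngamma n = {madd (madd a b) (bracket n c d) | a b c d.
       a \<in> rootspace n (\<lambda>H. H n n) \<and> c \<in> rootspace n (\<lambda>H. H n n) \<and>
       b \<in> rootspace n (\<lambda>H. - H n n) \<and> d \<in> rootspace n (\<lambda>H. - H n n)}"

text \<open>Tensors in gl(N) (x) gl(N) as 4-index arrays; A (x) B = (i,j,k,l) |-> A i j * B k l.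
  tens_span S T is the linear span of pure tensors S (x) T.\<close>
definition tensor :: "cmat \<Rightarrow> cmat \<Rightarrow> ctens" where
  "tensor A B = (\<lambda>i j k l. A i j * B k l)"

definition tens_span :: "cmat set \<Rightarrow> cmat set \<Rightarrow> ctens set" where
  "tens_span S T = {(\<lambda>i j k l. \<Sum>r<(m::nat). tensor (A r) (B r) i j k l) | m A B.
       \<forall>r<m. A r \<in> S \<and> B r \<in> T}"

text \<open>Pairing (A (x) B)(C (x) D) = kappa(A,C) kappa(B,D), extended bilinearly.\<close>
definition tpair :: "nat \<Rightarrow> ctens \<Rightarrow> ctens \<Rightarrow> complex" where
  "tpair n Y W = (2 * of_nat n - 1)^2 *
     (\<Sum>i<dimN n. \<Sum>j<dimN n. \<Sum>k<dimN n. \<Sum>l<dimN n. Y i j k l * W j i l k)"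

text \<open>Roots of z(n) = g(2): eps_a + eps_b with 1 <= a < b <= n-1.\<close>
definition zroots :: "nat \<Rightarrow> (nat \<times> nat) set" where
  "zroots n = {(a, b). 1 \<le> a \<and> a < b \<and> b \<le> n - 1}"

text \<open>V(mu + eps_{n gamma}) = l_{n gamma} (x) z(n), and its dual realized in
  l (x) z(nbar) as l_{n gamma} (x) z(nbar).\<close>
definition Vmod :: "nat \<Rightarrow> ctens set" where
  "Vmod n = tens_span (lngamma n) (grade n 2)"

definition Vstar :: "nat \<Rightarrow> ctens set" where
  "Vstar n = tens_span (lngamma n) (grade n (-2))"

text \<open>tau_2(x) = 1/2 (ad(x)^2 (x) Id) omega, omega = sum_gamma X*_gamma (x) X_gamma.\<close>
definition tau2 :: "nat \<Rightarrow> (nat \<Rightarrow> nat \<Rightarrow> cmat) \<Rightarrow> (nat \<Rightarrow> nat \<Rightarrow> cmat) \<Rightarrow> cmat \<Rightarrow> ctens" where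
  "tau2 n Xr Xs x = (\<lambda>i j k l. (1/2) * (\<Sum>(a, b) \<in> zroots n.
       tensor (bracket n x (bracket n x (Xs a b))) (Xr a b) i j k l))"

end

theory Submission
  imports Defs
begin

definition em :: "nat \<Rightarrow> nat \<Rightarrow> cmat" where
  "em p q = (\<lambda>i j. if i = p \<and> j = q then 1 else 0)"

lemma mmul_madd_left: "mmul n (madd A B) C = madd (mmul n A C) (mmul n B C)"
  by (auto simp: mmul_def madd_def distrib_right sum.distrib)
lemma mmul_madd_right: "mmul n C (madd A B) = madd (mmul n C A) (mmul n C B)"
  by (auto simp: mmul_def madd_def distrib_left sum.distrib)
lemma mmul_msmul_left: "mmul n (msmul c A) C = msmul c (mmul n A C)"
  by (auto simp: mmul_def msmul_def sum_distrib_left mult.assoc)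
lemma mmul_msmul_right: "mmul n C (msmul c A) = msmul c (mmul n C A)"
  by (auto simp: mmul_def msmul_def sum_distrib_left mult_ac)
lemma mmul_em_em: "mmul n (em p q) (em r s) = (if q = r \<and> q < dimN n then em p s else mzero)"
  by (auto simp: mmul_def em_def mzero_def fun_eq_iff if_distrib[of "\<lambda>x. x * _"] cong: if_cong)
lemma mmul_mzero[simp]: "mmul n mzero A = mzero" "mmul n A mzero = mzero"
  by (auto simp: mmul_def mzero_def)
lemma madd_mzero[simp]: "madd mzero A = A" "madd A mzero = A"
  by (auto simp: madd_def mzero_def)
lemma msmul_mzero[simp]: "msmul c mzero = mzero"
  by (auto simp: msmul_def mzero_def)
lemma msmul_msmul[simp]: "msmul c (msmul d A) = msmul (c*d) A"
  by (auto simp: msmul_def mult.assoc)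
lemma msmul_madd: "msmul c (madd A B) = madd (msmul c A) (msmul c B)"
  by (auto simp: msmul_def madd_def distrib_left)
lemma bracket_eq: "bracket n A B = madd (mmul n A B) (msmul (-1) (mmul n B A))"
  by (auto simp: bracket_def madd_def msmul_def)
lemma mtrace_madd: "mtrace n (madd A B) = mtrace n A + mtrace n B"
  by (simp add: mtrace_def madd_def sum.distrib)
lemma mtrace_msmul: "mtrace n (msmul c A) = c * mtrace n A"
  by (simp add: mtrace_def msmul_def sum_distrib_left)
lemma mtrace_em: "mtrace n (em p q) = (if p = q \<and> p < dimN n then 1 else 0)"
  by (auto simp: mtrace_def em_def intro: sum.neutral)
lemma mtrace_mzero[simp]: "mtrace n mzero = 0" by (simp add: mtrace_def mzero_def)

lemmas malg = mmul_madd_left mmul_madd_right mmul_msmul_left mmul_msmul_right mmul_em_em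
  msmul_madd bracket_eq mtrace_madd mtrace_msmul mtrace_em

lemma comp: 
  fixes m :: nat and s :: complex
  shows "mtrace (m+4) (mmul (m+4) (madd (em (m+4) 0) (msmul (-1) (em 0 (2*(m+4)))))
    (bracket (m+4) (madd (madd (em 1 0) (msmul (-1) (em 0 (m+4+1)))) (madd (em 2 (m+4)) (msmul (-1) (em (2*(m+4)) (m+4+2)))))
    (bracket (m+4) (madd (madd (em 1 0) (msmul (-1) (em 0 (m+4+1)))) (madd (em 2 (m+4)) (msmul (-1) (em (2*(m+4)) (m+4+2)))))
     (msmul s (madd (em (m+4+2) 1) (msmul (-1) (em (m+4+1) 2))))))) = -4 * s"
  by (simp add: malg dimN_def)

lemma comp_n:
  assumes "4 \<le> n"
  shows "mtrace n (mmul n (madd (em n 0) (msmul (-1) (em 0 (2*n))))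
    (bracket n (madd (madd (em 1 0) (msmul (-1) (em 0 (n+1)))) (madd (em 2 n) (msmul (-1) (em (2*n) (n+2)))))
    (bracket n (madd (madd (em 1 0) (msmul (-1) (em 0 (n+1)))) (madd (em 2 n) (msmul (-1) (em (2*n) (n+2)))))
     (msmul s (madd (em (n+2) 1) (msmul (-1) (em (n+1) 2))))))) = -4 * s"
proof -
  obtain m where n: "n = m + 4" using assms by (metis add.commute le_Suc_ex)
  show ?thesis unfolding n by (rule comp)
qed

lemma dual_lt: "i < dimN n \<Longrightarrow> dualidx n i < dimN n"
  by (auto simp: dualidx_def dimN_def)
lemma dual_iff: "k < dimN n \<Longrightarrow> j < dimN n \<Longrightarrow> (j = dualidx n k) = (k = dualidx n j)"
  by (auto simp: dualidx_def dimN_def)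

lemma mmul_trans_J: "mmul n (mtrans A) (Jform n) i j = (if j < dimN n then A (dualidx n j) i else 0)"
proof (cases "j < dimN n")
  case True
  have "mmul n (mtrans A) (Jform n) i j = (\<Sum>k<dimN n. if k = dualidx n j then A k i else 0)"
    unfolding mmul_def mtrans_def Jform_def
    by (rule sum.cong) (use True dual_iff[of _ n j] in auto)
  also have "\<dots> = A (dualidx n j) i" using dual_lt[OF True] by simp
  finally show ?thesis using True by simp
qed (auto simp: mmul_def Jform_def)

lemma mmul_J: "mmul n (Jform n) A i j = (if i < dimN n then A (dualidx n i) j else 0)"
proof (cases "i < dimN n")
  case True
  have "mmul n (Jform n) A i j = (\<Sum>k<dimN n. if k = dualidx n i then A k j else 0)"
    unfolding mmul_def Jform_def
    by (rule sum.cong) (use True in auto)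
  also have "\<dots> = A (dualidx n i) j" using dual_lt[OF True] by simp
  finally show ?thesis using True by simp
qed (auto simp: mmul_def Jform_def)

lemma soalg_iff: "A \<in> soalg n \<longleftrightarrow> supp_in n A \<and>
   (\<forall>i<dimN n. \<forall>j<dimN n. A (dualidx n j) i + A (dualidx n i) j = 0)"
proof
  assume "A \<in> soalg n"
  then show "supp_in n A \<and> (\<forall>i<dimN n. \<forall>j<dimN n. A (dualidx n j) i + A (dualidx n i) j = 0)"
    unfolding soalg_def madd_def by (auto simp: mmul_trans_J mmul_J) (metis)
next
  assume a: "supp_in n A \<and> (\<forall>i<dimN n. \<forall>j<dimN n. A (dualidx n j) i + A (dualidx n i) j = 0)"
  show "A \<in> soalg n"
    unfolding soalg_def madd_def using a by (auto simp: mmul_trans_J mmul_J supp_in_def)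
qed

lemma bracket_diag:
  assumes "\<forall>i j. i \<noteq> j \<longrightarrow> D i j = 0" "supp_in n X"
  shows "bracket n D X = (\<lambda>i j. (D i i - D j j) * X i j)"
proof (intro ext)
  fix i j
  have 1: "mmul n D X i j = (if i < dimN n then D i i * X i j else 0)"
  proof -
    have "mmul n D X i j = (\<Sum>k<dimN n. if k = i then D i i * X i j else 0)"
      unfolding mmul_def by (rule sum.cong) (use assms(1) in auto)
    then show ?thesis by simp
  qed
  have 2: "mmul n X D i j = (if j < dimN n then X i j * D j j else 0)"
  proof -
    have "mmul n X D i j = (\<Sum>k<dimN n. if k = j then X i j * D j j else 0)"
      unfolding mmul_def by (rule sum.cong) (use assms(1) in auto)
    then show ?thesis by simp
  qed
  show "bracket n D X i j = (D i i - D j j) * X i j"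
    unfolding bracket_def 1 2 using assms(2) by (auto simp: supp_in_def algebra_simps)
qed

lemma cartan_diag: "H \<in> cartan n \<Longrightarrow> \<forall>i j. i \<noteq> j \<longrightarrow> H i j = 0"
  by (auto simp: cartan_def)

lemma soalg_supp: "X \<in> soalg n \<Longrightarrow> supp_in n X" by (simp add: soalg_def)

lemma rootspace_entry:
  assumes "X \<in> rootspace n \<alpha>" "H \<in> cartan n"
  shows "(H i i - H j j) * X i j = \<alpha> H * X i j"
proof -
  have X: "X \<in> soalg n" and b: "bracket n H X = msmul (\<alpha> H) X"
    using assms by (auto simp: rootspace_def)
  have "bracket n H X = (\<lambda>i j. (H i i - H j j) * X i j)"
    by (rule bracket_diag[OF cartan_diag[OF assms(2)] soalg_supp[OF X]])
  then show ?thesis using b by (metis msmul_def)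
qed

definition dm :: "nat \<Rightarrow> nat \<Rightarrow> cmat" where
  "dm n m = (\<lambda>i j. if i = j \<and> i = m then 1 else if i = j \<and> i = n + m then -1 else 0)"

lemma dm_cartan: "1 \<le> m \<Longrightarrow> m \<le> n \<Longrightarrow> dm n m \<in> cartan n"
  unfolding cartan_def soalg_iff
  by (auto simp: dm_def supp_in_def dimN_def dualidx_def)

lemma xs_shape:
  assumes "X \<in> rootspace n (\<lambda>H. - (H 1 1 + H 2 2))" "2 \<le> n" "X i j \<noteq> 0"
  shows "(i = n+2 \<and> j = 1) \<or> (i = n+1 \<and> j = 2)"
proof -
  have e1: "(dm n 1 i i - dm n 1 j j) = - (dm n 1 1 1 + dm n 1 2 2)"
    using rootspace_entry[OF assms(1) dm_cartan[of 1 n], of i j] assms by auto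
  have e2: "(dm n 2 i i - dm n 2 j j) = - (dm n 2 1 1 + dm n 2 2 2)"
    using rootspace_entry[OF assms(1) dm_cartan[of 2 n], of i j] assms by auto
  show ?thesis using e1 e2 assms(2) by (auto simp: dm_def split: if_splits)
qed

lemma ortho:
  assumes "X \<in> rootspace n \<alpha>" "Y \<in> rootspace n \<beta>" "H \<in> cartan n" "\<alpha> H + \<beta> H \<noteq> 0"
  shows "mtrace n (mmul n X Y) = 0"
proof -
  have "X i k * Y k i = 0" for i k
  proof -
    have a: "(H i i - H k k) * X i k = \<alpha> H * X i k" by (rule rootspace_entry[OF assms(1,3)])
    have b: "(H k k - H i i) * Y k i = \<beta> H * Y k i" by (rule rootspace_entry[OF assms(2,3)])
    have "(\<alpha> H + \<beta> H) * (X i k * Y k i) = ((H i i - H k k) * X i k) * Y k i + X i k * ((H k k - H i i) * Y k i)"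
      using a b by (simp add: algebra_simps)
    also have "\<dots> = 0" by (simp add: algebra_simps)
    finally show ?thesis using assms(4) by simp
  qed
  then show ?thesis by (auto simp: mtrace_def mmul_def sum_distrib_left intro!: sum.neutral)
qed

lemma sum4:
  fixes a b :: "nat \<Rightarrow> nat \<Rightarrow> complex" and f g :: "'p \<Rightarrow> nat \<Rightarrow> nat \<Rightarrow> complex"
  assumes "finite P"
  shows "(\<Sum>i\<in>I. \<Sum>j\<in>I. \<Sum>k\<in>I. \<Sum>l\<in>I. a i j * b k l * (c * (\<Sum>p\<in>P. f p j i * g p l k)))
     = c * (\<Sum>p\<in>P. (\<Sum>i\<in>I. \<Sum>j\<in>I. a i j * f p j i) * (\<Sum>k\<in>I. \<Sum>l\<in>I. b k l * g p l k))"
proof -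
  have "c * (\<Sum>p\<in>P. (\<Sum>i\<in>I. \<Sum>j\<in>I. a i j * f p j i) * (\<Sum>k\<in>I. \<Sum>l\<in>I. b k l * g p l k))
    = c * (\<Sum>p\<in>P. (\<Sum>k\<in>I. \<Sum>l\<in>I. b k l * g p l k) * (\<Sum>i\<in>I. \<Sum>j\<in>I. a i j * f p j i))"
    by (simp add: mult.commute)
  also have "\<dots> = (\<Sum>p\<in>P. \<Sum>i\<in>I. \<Sum>j\<in>I. \<Sum>k\<in>I. \<Sum>l\<in>I. c * (a i j * f p j i * (b k l * g p l k)))"
    by (simp only: sum_distrib_left sum_distrib_right) (simp add: mult_ac)
  also have "\<dots> = (\<Sum>i\<in>I. \<Sum>j\<in>I. \<Sum>k\<in>I. \<Sum>l\<in>I. \<Sum>p\<in>P. c * (a i j * f p j i * (b k l * g p l k)))"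
    by (simp only: sum.swap[where A = P])
  also have "\<dots> = (\<Sum>i\<in>I. \<Sum>j\<in>I. \<Sum>k\<in>I. \<Sum>l\<in>I. a i j * b k l * (c * (\<Sum>p\<in>P. f p j i * g p l k)))"
    by (simp add: sum_distrib_left mult_ac)
  finally show ?thesis by simp
qed


lemma dual_dual: "i < dimN n \<Longrightarrow> dualidx n (dualidx n i) = i"
  by (auto simp: dualidx_def dimN_def)

lemma root_soalg:
  assumes "p < dimN n" "q < dimN n"
  shows "madd (em p q) (msmul (-1) (em (dualidx n q) (dualidx n p))) \<in> soalg n"
  unfolding soalg_iff
proof (intro conjI allI impI)
  show "supp_in n (madd (em p q) (msmul (-1) (em (dualidx n q) (dualidx n p))))"
    using assms dual_lt[OF assms(1)] dual_lt[OF assms(2)]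
    by (auto simp: supp_in_def madd_def msmul_def em_def)
  fix i j assume i: "i < dimN n" and j: "j < dimN n"
  have e1: "(dualidx n j = p) = (j = dualidx n p)" using dual_iff[OF j assms(1)] by auto
  have e2: "(dualidx n j = dualidx n q) = (j = q)" using dual_dual[OF j] dual_dual[OF assms(2)] by metis
  have e3: "(dualidx n i = p) = (i = dualidx n p)" using dual_iff[OF i assms(1)] by auto
  have e4: "(dualidx n i = dualidx n q) = (i = q)" using dual_dual[OF i] dual_dual[OF assms(2)] by metis
  show "madd (em p q) (msmul (-1) (em (dualidx n q) (dualidx n p))) (dualidx n j) i +
        madd (em p q) (msmul (-1) (em (dualidx n q) (dualidx n p))) (dualidx n i) j = 0"
  proof -
    have "madd (em p q) (msmul (-1) (em (dualidx n q) (dualidx n p))) (dualidx n j) i = (if j = dualidx n p \<and> i = q then 1 else 0) - (if j = q \<and> i = dualidx n p then 1 else 0)"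
      by (simp add: madd_def msmul_def em_def e1 e2)
    moreover have "madd (em p q) (msmul (-1) (em (dualidx n q) (dualidx n p))) (dualidx n i) j = (if i = dualidx n p \<and> j = q then 1 else 0) - (if i = q \<and> j = dualidx n p then 1 else 0)"
      by (simp add: madd_def msmul_def em_def e3 e4)
    ultimately show ?thesis by (cases "i = dualidx n p"; cases "j = q"; cases "i = q"; cases "j = dualidx n p"; simp)
  qed
qed

lemma soalg_madd: "A \<in> soalg n \<Longrightarrow> B \<in> soalg n \<Longrightarrow> madd A B \<in> soalg n"
proof -
  assume a: "A \<in> soalg n" "B \<in> soalg n"
  show ?thesis unfolding soalg_iff
  proof (intro conjI allI impI)
    show "supp_in n (madd A B)" using a by (simp add: soalg_iff supp_in_def madd_def)
    fix i j assume "i < dimN n" "j < dimN n"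
    then have "A (dualidx n j) i + A (dualidx n i) j = 0" "B (dualidx n j) i + B (dualidx n i) j = 0"
      using a by (auto simp: soalg_iff)
    then show "madd A B (dualidx n j) i + madd A B (dualidx n i) j = 0"
      by (simp add: madd_def algebra_simps)
  qed
qed


theorem proposition4p1:
  fixes n :: nat and Xr Xs :: "nat \<Rightarrow> nat \<Rightarrow> cmat"
  assumes "4 \<le> n"
    and "\<forall>(a, b) \<in> zroots n.
           Xr a b \<in> rootspace n (\<lambda>H. H a a + H b b) \<and> Xr a b \<noteq> mzero \<and>
           Xs a b \<in> rootspace n (\<lambda>H. - (H a a + H b b)) \<and>
           kill n (Xs a b) (Xr a b) = 1"
  shows "\<exists>Y \<in> Vstar n. \<exists>x \<in> grade n 1. tpair n Y (tau2 n Xr Xs x) \<noteq> 0"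
proof -
  have n4: "4 \<le> n" by fact
  have fin: "finite (zroots n)"
    by (rule finite_subset[of _ "{..n} \<times> {..n}"]) (auto simp: zroots_def)
  have z12: "(1, 2) \<in> zroots n" using n4 by (auto simp: zroots_def)
  define B where "B = Xs 1 2"
  have Brs: "B \<in> rootspace n (\<lambda>H. - (H 1 1 + H 2 2))" and kB: "kill n B (Xr 1 2) = 1"
    using assms(2) z12 unfolding B_def by auto
  have Bso: "B \<in> soalg n" using Brs by (simp add: rootspace_def)
  have rel: "B (n+2) 1 + B (n+1) 2 = 0"
  proof -
    have "B (dualidx n 2) 1 + B (dualidx n 1) 2 = 0" using Bso n4 unfolding soalg_iff by (simp add: dimN_def)
    moreover have "dualidx n 2 = n+2" "dualidx n 1 = n+1" using n4 by (auto simp: dualidx_def)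
    ultimately show ?thesis by simp
  qed
  define s where "s = B (n+2) 1"
  have shp: "B i j \<noteq> 0 \<Longrightarrow> (i = n+2 \<and> j = 1) \<or> (i = n+1 \<and> j = 2)" for i j
    using xs_shape[OF Brs] n4 by auto
  have Beq: "B = msmul s (madd (em (n+2) 1) (msmul (-1) (em (n+1) 2)))"
  proof (intro ext)
    fix i j
    show "B i j = msmul s (madd (em (n+2) 1) (msmul (-1) (em (n+1) 2))) i j"
    proof -
      consider "i = n+2 \<and> j = 1" | "i = n+1 \<and> j = 2" | "\<not> (i = n+2 \<and> j = 1)" "\<not> (i = n+1 \<and> j = 2)" by blast
      then show ?thesis
      proof cases
        case 1 then show ?thesis by (simp add: msmul_def madd_def em_def s_def)
      next
        case 2 then show ?thesis using rel by (simp add: msmul_def madd_def em_def s_def eq_neg_iff_add_eq_0) (metis add.commute)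
      next
        case 3 then have "B i j = 0" using shp[of i j] by blast
        then show ?thesis using 3 by (simp add: msmul_def madd_def em_def) blast
      qed
    qed
  qed
  have trB: "mtrace n (mmul n B (Xr 1 2)) \<noteq> 0" using kB by (auto simp: kill_def)
  have s0: "s \<noteq> 0"
  proof
    assume "s = 0"
    then have "B = mzero" using Beq by (auto simp: msmul_def mzero_def)
    then show False using trB by simp
  qed
  have H0v: "H0 n (n+2) (n+2) = -1" "H0 n 1 1 = 1" "H0 n (n+1) (n+1) = -1" "H0 n 2 2 = 1"
     "H0 n 0 0 = 0" "H0 n n n = 0" "H0 n (2*n) (2*n) = 0"
    unfolding H0_def using n4 by auto
  have H0diag: "\<forall>i j. i \<noteq> j \<longrightarrow> H0 n i j = 0" by (simp add: H0_def)
  have Bgr: "B \<in> grade n (-2)"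
  proof -
    have "bracket n (H0 n) B = msmul (of_int (-2)) B"
    proof (subst bracket_diag[OF H0diag soalg_supp[OF Bso]], intro ext)
      fix i j
      show "(H0 n i i - H0 n j j) * B i j = msmul (of_int (-2)) B i j"
      proof -
        consider "i = n+2 \<and> j = 1" | "i = n+1 \<and> j = 2" | "B i j = 0" using shp[of i j] by blast
        then show ?thesis
        proof cases
          case 1 then show ?thesis using n4 by (simp add: msmul_def H0v H0v[simplified])
        next
          case 2 then show ?thesis using n4 by (simp add: msmul_def H0v H0v[simplified])
        next
          case 3 then show ?thesis by (simp add: msmul_def)
        qed
      qed
    qed
    then show ?thesis using Bso by (simp add: grade_def)
  qed
  define A where "A = madd (em n 0) (msmul (-1) (em 0 (2*n)))"
  have Aso: "A \<in> soalg n"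
  proof -
    have "A = madd (em n 0) (msmul (-1) (em (dualidx n 0) (dualidx n n)))"
      unfolding A_def using n4 by (simp add: dualidx_def mult_2)
    then show ?thesis using root_soalg[of n n 0] by (simp add: dimN_def)
  qed
  have Ars: "A \<in> rootspace n (\<lambda>H. H n n)"
  proof -
    have "bracket n H A = msmul (H n n) A" if H: "H \<in> cartan n" for H
    proof -
      have Hso: "H \<in> soalg n" using H by (simp add: cartan_def)
      have h00: "H 0 0 = 0"
      proof -
        have "H (dualidx n 0) 0 + H (dualidx n 0) 0 = 0" using Hso unfolding soalg_iff by (simp add: dimN_def)
        then show ?thesis by (simp add: dualidx_def)
      qed
      have h2n: "H n n + H (2*n) (2*n) = 0"
      proof -
        have "H (dualidx n (2*n)) n + H (dualidx n n) (2*n) = 0"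
          using Hso n4 unfolding soalg_iff by (auto simp: dimN_def)
        moreover have "dualidx n (2*n) = n" "dualidx n n = 2*n" using n4 by (auto simp: dualidx_def)
        ultimately show ?thesis by simp
      qed
      show ?thesis
      proof (subst bracket_diag[OF cartan_diag[OF H] soalg_supp[OF Aso]], intro ext)
        fix i j
        show "(H i i - H j j) * A i j = msmul (H n n) A i j"
        proof -
          consider "i = n \<and> j = 0" | "i = 0 \<and> j = 2*n" | "\<not> (i = n \<and> j = 0)" "\<not> (i = 0 \<and> j = 2*n)" by blast
          then show ?thesis
          proof cases
            case 1 then show ?thesis using h00 n4 by (simp add: A_def msmul_def madd_def em_def)
          next
            case 2 then show ?thesis using h00 h2n n4 by (simp add: A_def msmul_def madd_def em_def eq_neg_iff_add_eq_0) (metis add.commute)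
          next
            case 3 then show ?thesis by (simp add: A_def msmul_def madd_def em_def) blast
          qed
        qed
      qed
    qed
    then show ?thesis using Aso by (simp add: rootspace_def)
  qed
  have zso: "mzero \<in> soalg n"
    unfolding soalg_iff by (simp add: mzero_def supp_in_def)
  have zrs: "mzero \<in> rootspace n (\<lambda>H. - H n n)"
    using zso by (simp add: rootspace_def bracket_eq)
  have zrs2: "mzero \<in> rootspace n (\<lambda>H. H n n)"
    using zso by (simp add: rootspace_def bracket_eq)
  have Alng: "A \<in> lngamma n"
    unfolding lngamma_def
    by (rule CollectI, rule exI[of _ A], rule exI[of _ mzero], rule exI[of _ mzero], rule exI[of _ mzero])
       (use Ars zrs zrs2 in \<open>simp add: bracket_eq\<close>)
  define Y where "Y = tensor A B"
  have YV: "Y \<in> Vstar n"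
    unfolding Vstar_def tens_span_def Y_def
    by (rule CollectI, rule exI[of _ 1], rule exI[of _ "\<lambda>_. A"], rule exI[of _ "\<lambda>_. B"])
       (use Alng Bgr in simp)
  define x where "x = madd (madd (em 1 0) (msmul (-1) (em 0 (n+1)))) (madd (em 2 n) (msmul (-1) (em (2*n) (n+2))))"
  have xso: "x \<in> soalg n"
  proof -
    have "x = madd (madd (em 1 0) (msmul (-1) (em (dualidx n 0) (dualidx n 1))))
                   (madd (em 2 n) (msmul (-1) (em (dualidx n n) (dualidx n 2))))"
      unfolding x_def using n4 by (simp add: dualidx_def mult_2)
    then show ?thesis using root_soalg[of 1 n 0] root_soalg[of 2 n n] n4
      by (simp add: dimN_def soalg_madd)
  qed
  have xgr: "x \<in> grade n 1"
  proof -
    have "bracket n (H0 n) x = msmul (of_int 1) x"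
    proof (subst bracket_diag[OF H0diag soalg_supp[OF xso]], intro ext)
      fix i j
      show "(H0 n i i - H0 n j j) * x i j = msmul (of_int 1) x i j"
      proof -
        consider "i = 1 \<and> j = 0" | "i = 0 \<and> j = n+1" | "i = 2 \<and> j = n" | "i = 2*n \<and> j = n+2"
          | "\<not> (i = 1 \<and> j = 0)" "\<not> (i = 0 \<and> j = n+1)" "\<not> (i = 2 \<and> j = n)" "\<not> (i = 2*n \<and> j = n+2)" by blast
        then show ?thesis
        proof cases
          case 1 then show ?thesis using n4 by (simp add: x_def msmul_def madd_def em_def H0v H0v[simplified])
        next
          case 2 then show ?thesis using n4 by (simp add: x_def msmul_def madd_def em_def H0v H0v[simplified])
        next
          case 3 then show ?thesis using n4 by (simp add: x_def msmul_def madd_def em_def H0v H0v[simplified])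
        next
          case 4 then show ?thesis using n4 by (simp add: x_def msmul_def madd_def em_def H0v H0v[simplified])
        next
          case 5 then show ?thesis by (simp add: x_def msmul_def madd_def em_def) blast
        qed
      qed
    qed
    then show ?thesis using xso by (simp add: grade_def)
  qed
  define M where "M = (\<lambda>p. bracket n x (bracket n x (Xs (fst p) (snd p))))"
  define R where "R = (\<lambda>p. Xr (fst p) (snd p))"
  have tau: "tau2 n Xr Xs x = (\<lambda>i j k l. (1/2) * (\<Sum>p\<in>zroots n. M p i j * R p k l))"
    by (simp add: tau2_def tensor_def M_def R_def split_def)
  have tp: "tpair n Y (tau2 n Xr Xs x) = (1/2) * ((2 * of_nat n - 1)^2 *
     (\<Sum>p\<in>zroots n. mtrace n (mmul n A (M p)) * mtrace n (mmul n B (R p))))"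
    unfolding tpair_def tau Y_def tensor_def
    using sum4[OF fin, where I="{..<dimN n}" and a=A and b=B and c="1/2" and f=M and g=R]
    by (simp add: mtrace_def mmul_def lessThan_def)
  have zero: "mtrace n (mmul n B (R p)) = 0" if p: "p \<in> zroots n - {(1,2)}" for p
  proof -
    obtain a b where pab: "p = (a, b)" by (cases p)
    have ab: "1 \<le> a" "a < b" "b \<le> n - 1" "(a, b) \<noteq> (1, 2)" using p pab by (auto simp: zroots_def)
    have Rrs: "R p \<in> rootspace n (\<lambda>H. H a a + H b b)"
      using assms(2) p pab by (auto simp: R_def)
    show ?thesis
    proof (cases "a = 1")
      case True
      then show ?thesis
        using ortho[OF Brs Rrs dm_cartan[of 2 n]] ab n4 by (auto simp: dm_def)
    next
      case False
      then show ?thesis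
        using ortho[OF Brs Rrs dm_cartan[of 1 n]] ab n4 by (auto simp: dm_def)
    qed
  qed
  have sumeq: "(\<Sum>p\<in>zroots n. mtrace n (mmul n A (M p)) * mtrace n (mmul n B (R p)))
     = mtrace n (mmul n A (M (1,2))) * mtrace n (mmul n B (R (1,2)))"
    using sum.remove[OF fin z12, of "\<lambda>p. mtrace n (mmul n A (M p)) * mtrace n (mmul n B (R p))"] zero
    by simp
  have trA: "mtrace n (mmul n A (M (1,2))) = -4 * s"
  proof -
    have "M (1,2) = bracket n x (bracket n x B)" by (simp add: M_def B_def)
    then show ?thesis unfolding Beq A_def x_def using comp_n[OF n4, of s] by simp
  qed
  have cn: "(2 * of_nat n - 1 :: complex) \<noteq> 0"
  proof
    assume "(2 * of_nat n - 1 :: complex) = 0"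
    then have "(of_nat (2*n) :: complex) = of_nat 1" by simp
    then have "2*n = 1" by (metis of_nat_eq_iff)
    then show False by simp
  qed
  have "tpair n Y (tau2 n Xr Xs x) \<noteq> 0"
    unfolding tp sumeq trA using s0 cn trB by (simp add: R_def)
  then show ?thesis using YV xgr by blast
qed

end
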